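(* Let $N\ge 2$ and let $X\subseteq \mathbb{Z}_N^2$ with $|X|=2N+1$. Suppose there is $a\in\mathbb{Z}_N$ such that $X$ contains every element of the row $\{a\}\times\mathbb{Z}_N$. Then there exists $S\subseteq X$ with $|S|=N$ and $\sum_{s\in S}s=(0,0)$.
   Context: For $a\in\mathbb{Z}_N$, the row $a$ of $\mathbb{Z}_N^2$ is the set $\{a\}\times\mathbb{Z}_N=\{(a,y):y\in\mathbb{Z}_N\}$. *)

theory Defs
  imports Main
begin

text \<open>Z_N is represented by the residues {0..<N} (type nat); Z_N^2 by pairs of residues.
  Addition in Z_N^2 is componentwise addition mod N.\<close>

definition ZN2 :: "nat \<Rightarrow> (nat \<times> nat) set" where
  "ZN2 N = {0..<N} \<times> {0..<N}"

definition row :: "nat \<Rightarrow> nat \<Rightarrow> (nat \<times> nat) set" where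
  "row N a = {a} \<times> {0..<N}"

definition sumZN2 :: "nat \<Rightarrow> (nat \<times> nat) set \<Rightarrow> nat \<times> nat" where
  "sumZN2 N S = ((\<Sum>s\<in>S. fst s) mod N, (\<Sum>s\<in>S. snd s) mod N)"

end

theory Submission
  imports Defs
begin

lemma zero_sum:
  fixes g :: "'a \<Rightarrow> int"
  assumes "finite A" "card A = n" "n > 0"
  shows "\<exists>T\<subseteq>A. T \<noteq> {} \<and> int n dvd sum g T"
proof -
  obtain h where h: "bij_betw h {0..<n} A" using ex_bij_betw_nat_finite[OF assms(1)] assms(2) by auto
  define P where "P j = (\<Sum>i\<in>{0..<j}. g (h i))" for j
  define f where "f j = P j mod int n" for j
  have "f ` {0..n} \<subseteq> {0..<int n}" using assms(3) by (auto simp: f_def)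
  hence "card (f ` {0..n}) \<le> n" by (metis card_atLeastLessThan_int card_mono finite_atLeastLessThan_int diff_zero nat_int)
  hence "card (f ` {0..n}) < card {0..n}" by simp
  hence "\<not> inj_on f {0..n}" using pigeonhole by blast
  then obtain i j where ij: "i \<in> {0..n}" "j \<in> {0..n}" "i \<noteq> j" "f i = f j" unfolding inj_on_def by blast
  have "\<exists>i j. i < j \<and> j \<le> n \<and> f i = f j"
  proof (cases "i < j")
    case True then show ?thesis using ij by auto
  next
    case False then show ?thesis using ij by (intro exI[of _ j] exI[of _ i]) auto
  qed
  then obtain i j where ij: "i < j" "j \<le> n" "f i = f j" by blast
  define T where "T = h ` {i..<j}"
  have sub: "{i..<j} \<subseteq> {0..<n}" using ij by auto
  have inj: "inj_on h {i..<j}" using h sub unfolding bij_betw_def by (meson inj_on_subset)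
  have "T \<subseteq> A" using h sub unfolding T_def bij_betw_def by auto
  moreover have "T \<noteq> {}" using ij unfolding T_def by auto
  moreover have "sum g T = P j - P i"
    unfolding T_def P_def using sum.reindex[OF inj, of g] sum_diff_nat_ivl[of 0 i j "\<lambda>x. g (h x)"] ij by auto
  moreover have "int n dvd P j - P i" using ij(3) unfolding f_def by (metis mod_eq_dvd_iff)
  ultimately show ?thesis by metis
qed

lemma interval_sum: "2 * (\<Sum>i\<in>{t..<t+n}. (i::nat)) + n = n*(2*t+n)"
  by (induction n) (auto simp: algebra_simps)

lemma block:
  fixes m N d :: nat
  assumes "1 \<le> m" "m \<le> N" "d \<le> m * (N - m)"
  shows "\<exists>B\<subseteq>{0..<N}. card B = m \<and> 2 * sum id B + m = 2 * d + m * m"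
proof -
  define t where "t = d div m"
  define e where "e = d mod m"
  define j where "j = t + m - e"
  have e: "e < m" using assms unfolding e_def by auto
  have d: "d = t * m + e" unfolding t_def e_def by simp
  have tle: "t \<le> N - m" using assms(3) d
    by (metis add_leD1 assms(1) le_less_trans less_imp_le_nat mult.commute mult_le_cancel2 not_le zero_less_one)
  have j: "j \<in> {t..<t+(m+1)}" using e unfolding j_def by auto
  define B where "B = {t..<t+(m+1)} - {j}"
  have "B \<subseteq> {0..<N}"
  proof
    fix x assume x: "x \<in> B"
    show "x \<in> {0..<N}"
    proof (cases "t = N - m")
      case True
      have "e = 0"
      proof (rule ccontr)
        assume "e \<noteq> 0"
        hence "d > m * (N - m)" using d True by (simp add: mult.commute)
        thus False using assms(3) by simp
      qed
      then show ?thesis using x True assms unfolding B_def j_def by auto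
    next
      case False
      then show ?thesis using x tle assms unfolding B_def by auto
    qed
  qed
  moreover have "card B = m" unfolding B_def using j by simp
  moreover have "2 * sum id B + m = 2 * d + m * m"
  proof -
    have "sum id B = sum id {t..<t+(m+1)} - j" unfolding B_def using j by (simp add: sum_diff1_nat)
    moreover have "2 * sum id {t..<t+(m+1)} + (m+1) = (m+1)*(2*t+(m+1))" using interval_sum[of t "m+1"] by simp
    moreover have "j \<le> sum id {t..<t+(m+1)}" using j by (metis finite_atLeastLessThan id_apply member_le_sum zero_le)
    ultimately show ?thesis unfolding d j_def using e by (simp add: algebra_simps)
  qed
  ultimately show ?thesis by blast
qed


lemma mk_le: "1 \<le> (m::nat) \<Longrightarrow> 1 \<le> k \<Longrightarrow> m + k \<le> m * k + 1"
  by (cases m; cases k; simp)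

lemma sum_row: "sum f ({a} \<times> B) = (\<Sum>b\<in>B. f (a, b))"
proof -
  have "{a} \<times> B = (\<lambda>b. (a, b)) ` B" by auto
  moreover have "inj_on (\<lambda>b. (a, b)) B" by (auto simp: inj_on_def)
  ultimately show ?thesis by (simp add: sum.reindex)
qed

theorem theorem3p1:
  fixes N :: nat and X :: "(nat \<times> nat) set"
  assumes "N \<ge> 2"
    and "X \<subseteq> ZN2 N"
    and "card X = 2 * N + 1"
    and "\<exists>a\<in>{0..<N}. row N a \<subseteq> X"
  shows "\<exists>S\<subseteq>X. card S = N \<and> sumZN2 N S = (0, 0)"
proof -
  obtain a where a: "a < N" "row N a \<subseteq> X" using assms(4) by auto
  define R where "R = row N a"
  have "finite (ZN2 N)" by (simp add: ZN2_def)
  hence finX: "finite X" using assms(2) finite_subset by blast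
  have cardR: "card R = N" unfolding R_def row_def by (simp add: card_cartesian_product)
  define Y where "Y = X - R"
  have finR: "finite R" unfolding R_def row_def by simp
  have RX: "R \<subseteq> X" using a(2) unfolding R_def .
  have cardY: "card Y = N + 1" unfolding Y_def
    using card_Diff_subset[OF finR RX] cardR assms(3) by simp
  have Yprop: "\<And>p. p \<in> Y \<Longrightarrow> fst p < N \<and> snd p < N \<and> fst p \<noteq> a"
    using assms(2) unfolding Y_def R_def row_def ZN2_def by auto
  have finY: "finite Y" unfolding Y_def using finX by simp
  have YX: "Y \<subseteq> X" unfolding Y_def by auto
  have "\<exists>y0\<in>Y. \<exists>y1\<in>Y. fst y0 \<noteq> fst y1"
  proof (rule ccontr)
    assume na: "\<not> (\<exists>y0\<in>Y. \<exists>y1\<in>Y. fst y0 \<noteq> fst y1)"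
    have all: "\<forall>p\<in>Y. \<forall>q\<in>Y. fst p = fst q" using na by blast
    have "Y \<noteq> {}" using cardY by auto
    then obtain y where y: "y \<in> Y" by auto
    have "Y \<subseteq> {fst y} \<times> {0..<N}"
    proof
      fix p
      assume p: "p \<in> Y"
      have "fst p = fst y" using p y all by blast
      moreover have "snd p < N" using Yprop p by blast
      ultimately show "p \<in> {fst y} \<times> {0..<N}" by (cases p) simp
    qed
    hence "card Y \<le> card ({fst y} \<times> {0..<N})" by (rule card_mono[rotated]) simp
    thus False using cardY by (simp add: card_cartesian_product)
  qed
  then obtain y0 y1 where y: "y0 \<in> Y" "y1 \<in> Y" "fst y0 \<noteq> fst y1" by blast
  define g :: "nat \<times> nat \<Rightarrow> int" where "g p = int (fst p) - int a" for p
  have key: "\<exists>T\<subseteq>Y. T \<noteq> {} \<and> card T < N \<and> int N dvd sum g T"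
  proof -
    have cy: "card (Y - {y}) = N" if "y \<in> Y" for y using cardY that finY by simp
    obtain T0 where T0: "T0 \<subseteq> Y - {y0}" "T0 \<noteq> {}" "int N dvd sum g T0"
      using zero_sum[OF _ cy[OF y(1)], of g] finY assms(1) by auto
    obtain T1 where T1: "T1 \<subseteq> Y - {y1}" "T1 \<noteq> {}" "int N dvd sum g T1"
      using zero_sum[OF _ cy[OF y(2)], of g] finY assms(1) by auto
    show ?thesis
    proof (cases "card T0 < N")
      case True thus ?thesis using T0 by blast
    next
      case False
      hence e0: "T0 = Y - {y0}" using card_seteq[OF _ T0(1)] finY cy[OF y(1)] by simp
      show ?thesis
      proof (cases "card T1 < N")
        case True thus ?thesis using T1 by blast
      next
        case False
        hence e1: "T1 = Y - {y1}" using card_seteq[OF _ T1(1)] finY cy[OF y(2)] by simp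
        have s0: "sum g Y = g y0 + sum g (Y - {y0})" by (simp add: sum.remove finY y(1))
        have s1: "sum g Y = g y1 + sum g (Y - {y1})" by (simp add: sum.remove finY y(2))
        have "int N dvd sum g T1 - sum g T0" using T0 T1 by simp
        moreover have "g y0 - g y1 = sum g T1 - sum g T0" unfolding e0 e1 using s0 s1 by linarith
        moreover have "int (fst y0) - int (fst y1) = g y0 - g y1" by (simp add: g_def)
        ultimately have "int N dvd int (fst y0) - int (fst y1)" by simp
        hence "int (fst y0) mod int N = int (fst y1) mod int N" by (simp add: mod_eq_dvd_iff)
        hence "fst y0 = fst y1" using Yprop[OF y(1)] Yprop[OF y(2)] by simp
        thus ?thesis using y(3) by simp
      qed
    qed
  qed
  then obtain T where T: "T \<subseteq> Y" "T \<noteq> {}" "card T < N" "int N dvd sum g T" by blast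
  have finT: "finite T" using T(1) finY finite_subset by blast
  define k where "k = card T"
  have k: "1 \<le> k" "k < N" using T finT unfolding k_def by (auto simp: Suc_le_eq card_gt_0_iff)
  define m where "m = N - k"
  have m: "1 \<le> m" "m \<le> N" "N - m = k" "m + k = N" using k unfolding m_def by auto
  define c where "c = int (\<Sum>p\<in>T. snd p)"
  define s0 where "s0 = (\<Sum>i\<in>{0..<m}. i)"
  have s0: "2 * s0 + m = m * m" using interval_sum[of 0 m] unfolding s0_def by simp
  define d where "d = nat ((- (c + int s0)) mod int N)"
  have dint: "int d = (- (c + int s0)) mod int N" unfolding d_def using assms(1) by simp
  have "(- (c + int s0)) mod int N < int N" using assms(1) by simp
  hence dN: "d < N" using dint by linarith
  have "d \<le> m * k" using dN mk_le[OF m(1) k(1)] m(4) by linarith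
  hence "d \<le> m * (N - m)" using m(3) by simp
  then obtain B where B: "B \<subseteq> {0..<N}" "card B = m" "2 * sum id B + m = 2 * d + m * m"
    using block[OF m(1) m(2)] by blast
  have sumB: "sum id B = d + s0" using B(3) s0 by linarith
  have finB: "finite B" using B(1) finite_subset by blast
  define S where "S = T \<union> ({a} \<times> B)"
  have RS: "{a} \<times> B \<subseteq> X" using a(2) B(1) unfolding row_def by auto
  have disj: "T \<inter> ({a} \<times> B) = {}" using T(1) Yprop by fastforce
  have SX: "S \<subseteq> X" unfolding S_def using T(1) YX RS by auto
  have cardS: "card S = N" unfolding S_def
    using card_Un_disjoint[OF finT _ disj] finB B(2) k_def m(4)
    by (simp add: card_cartesian_product)
  have fsum: "(\<Sum>s\<in>S. fst s) = (\<Sum>s\<in>T. fst s) + m * a"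
    unfolding S_def using sum.union_disjoint[OF finT _ disj, of fst] finB B(2)
    by (simp add: sum_row)
  have ssum: "(\<Sum>s\<in>S. snd s) = (\<Sum>s\<in>T. snd s) + sum id B"
    unfolding S_def using sum.union_disjoint[OF finT _ disj, of snd] finB
    by (simp add: sum_row)
  have "sum g T = int (\<Sum>s\<in>T. fst s) - int k * int a"
    unfolding g_def k_def by (simp add: sum_subtractf of_nat_sum)
  moreover have hmk: "int N * int a = int m * int a + int k * int a"
    using m(4) by (metis distrib_right of_nat_add)
  ultimately have F: "int ((\<Sum>s\<in>T. fst s) + m * a) = sum g T + int N * int a"
    by simp
  have "int N dvd int ((\<Sum>s\<in>T. fst s) + m * a)" unfolding F
    by (rule dvd_add[OF T(4)]) simp
  hence "N dvd (\<Sum>s\<in>T. fst s) + m * a" by (simp only: of_nat_dvd_iff)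
  hence f0: "(\<Sum>s\<in>S. fst s) mod N = 0" unfolding fsum dvd_eq_mod_eq_0 .
  define x where "x = c + int s0"
  have A: "int ((\<Sum>s\<in>T. snd s) + sum id B) = x + (- x) mod int N"
  proof -
    have e1: "int ((\<Sum>s\<in>T. snd s) + sum id B) = c + int s0 + int d" unfolding c_def using sumB by simp
    show ?thesis unfolding e1 dint x_def by simp
  qed
  have B: "(x + (- x) mod int N) mod int N = 0" using mod_add_right_eq[of x "- x" "int N"] by simp
  have "int ((\<Sum>s\<in>T. snd s) + sum id B) mod int N = 0" unfolding A by (rule B)
  hence "int N dvd int ((\<Sum>s\<in>T. snd s) + sum id B)" by (simp only: dvd_eq_mod_eq_0)
  hence "N dvd (\<Sum>s\<in>T. snd s) + sum id B" by (simp only: of_nat_dvd_iff)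
  hence s0': "(\<Sum>s\<in>S. snd s) mod N = 0" unfolding ssum dvd_eq_mod_eq_0 .
  have "sumZN2 N S = (0, 0)" unfolding sumZN2_def using f0 s0' by simp
  thus ?thesis using SX cardS by blast
qed

end
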